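(* Let $\tau>0$, $a>4$, let $s,d$ be integers with $1\le s\le d$, and let $\mathcal P$ be any subset of $\mathcal P_{a,\tau}$. Suppose that for some number $\phi(s,d)>0$ and constants $c_1,c_2,c_1',c_2'>0$, $$\inf_{\hat T}\sup_{P_\xi\in\mathcal P}\sup_{\sigma>0}\sup_{\theta\in\Theta_s}\mathbf P_{\theta,P_\xi,\sigma}\Big(\Big|\frac{\hat T}{\sigma^2}-1\Big|\ge\frac{c_1}{\sqrt d}\Big)\ge c_1'$$ and $$\inf_{\hat T}\sup_{P_\xi\in\mathcal P}\sup_{\sigma>0}\sup_{\theta\in\Theta_s}\mathbf P_{\theta,P_\xi,\sigma}\Big(\Big|\frac{\hat T-\|\theta\|_2}{\sigma}\Big|\ge c_2\phi(s,d)\Big)\ge c_2'.$$ Then there exist constants $c_3,c_3'>0$ (depending only on $a,\tau,c_1,c_2,c_1',c_2'$) such that $$\inf_{\hat T}\sup_{P_\xi\in\mathcal P}\sup_{\sigma>0}\sup_{\theta\in\Theta_s}\mathbf P_{\theta,P_\xi,\sigma}\Big(\Big|\frac{\hat T}{\sigma^2}-1\Big|\ge c_3\max\Big(\frac1{\sqrt d},\frac{\phi^2(s,d)}d\Big)\Big)\ge c_3'.$$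
   Context: Model: $Y_i=\theta_i+\sigma\xi_i$, $i=1,\dots,d$, $\theta\in\mathbb R^d$, $\sigma>0$, $\xi_i$ i.i.d. with distribution $P_\xi$; $\mathbf P_{\theta,P_\xi,\sigma}$ is the law of $Y$; $\Theta_s=\{\theta:\|\theta\|_0\le s\}$. For $\tau>0,a\ge2$, $\mathcal P_{a,\tau}$: distributions with $\mathbf E\xi_1=0,\mathbf E\xi_1^2=1$, $\mathbf P(|\xi_1|>t)\le(\tau/t)^a$ for all $t\ge2$. $\inf_{\hat T}$ is the infimum over all estimators (measurable functions of $Y$). *)

theory Defs
  imports "HOL-Probability.Probability"
begin

definition noise_class :: "real \<Rightarrow> real \<Rightarrow> real measure set" where
  "noise_class a \<tau> = {P. prob_space P \<and> sets P = sets borel \<and>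
      integrable P (\<lambda>x. x) \<and> (\<integral>x. x \<partial>P) = 0 \<and>
      integrable P (\<lambda>x. x ^ 2) \<and> (\<integral>x. x ^ 2 \<partial>P) = 1 \<and>
      (\<forall>t\<ge>2. measure P {x. \<bar>x\<bar> > t} \<le> (\<tau> / t) powr a)}"

text \<open>Vectors in R^d are functions nat => real, coordinates 0..d-1, zero outside.
  Theta_s = s-sparse vectors.\<close>
definition sparse_vecs :: "nat \<Rightarrow> nat \<Rightarrow> (nat \<Rightarrow> real) set" where
  "sparse_vecs s d = {\<theta>. (\<forall>i\<ge>d. \<theta> i = 0) \<and> card {i. i < d \<and> \<theta> i \<noteq> 0} \<le> s}"

definition l2norm :: "nat \<Rightarrow> (nat \<Rightarrow> real) \<Rightarrow> real" where
  "l2norm d \<theta> = sqrt (\<Sum>i<d. (\<theta> i)\<^sup>2)"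

definition sample_space :: "nat \<Rightarrow> (nat \<Rightarrow> real) measure" where
  "sample_space d = PiM {..<d} (\<lambda>_. borel)"

text \<open>Law of Y = theta + sigma xi, xi_i iid ~ P.\<close>
definition obs_law :: "nat \<Rightarrow> (nat \<Rightarrow> real) \<Rightarrow> real measure \<Rightarrow> real \<Rightarrow> (nat \<Rightarrow> real) measure" where
  "obs_law d \<theta> P \<sigma> = PiM {..<d} (\<lambda>i. distr P borel (\<lambda>x. \<theta> i + \<sigma> * x))"

definition minimax_prob ::
  "nat \<Rightarrow> nat \<Rightarrow> real measure set \<Rightarrow> (real \<Rightarrow> real \<Rightarrow> (nat \<Rightarrow> real) \<Rightarrow> bool) \<Rightarrow> ereal" where
  "minimax_prob s d \<P> E =
     (INF T \<in> borel_measurable (sample_space d).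
        SUP P \<in> \<P>. SUP \<sigma> \<in> {0<..}. SUP \<theta> \<in> sparse_vecs s d.
          ereal (measure (obs_law d \<theta> P \<sigma>) {y \<in> space (sample_space d). E (T y) \<sigma> \<theta>}))"

end

theory Submission
  imports Defs
begin



lemma dyadic_bound:
  fixes x :: real
  shows "ennreal (x^4) \<le> 16 + (\<Sum>k. ennreal (16^(k+2)) * indicator {x. 2^(k+1) < \<bar>x\<bar>} x)"
proof (cases "\<bar>x\<bar> \<le> 2")
  case True
  have "x^4 = \<bar>x\<bar>^4" by (simp add: power_even_abs)
  also have "\<dots> \<le> 2^4" using True by (intro power_mono) auto
  finally have "ennreal (x^4) \<le> 16" by (simp add: ennreal_le_iff[symmetric])
  then show ?thesis by (meson add_increasing2 order.trans zero_le)
next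
  case False
  obtain n :: nat where n: "\<bar>x\<bar> \<le> 2^n" using real_arch_pow[of 2 "\<bar>x\<bar>"] by (auto intro: less_imp_le)
  define m where "m = (LEAST n. \<bar>x\<bar> \<le> (2::real)^n)"
  have m1: "\<bar>x\<bar> \<le> 2^m" unfolding m_def by (rule LeastI[of _ n]) (rule n)
  have m2: "\<not> \<bar>x\<bar> \<le> 2^(m-1)" if "m > 0"
  proof
    assume "\<bar>x\<bar> \<le> 2^(m-1)"
    then have "m \<le> m - 1" unfolding m_def by (rule Least_le)
    with that show False by simp
  qed
  have "m \<ge> 2"
  proof (rule ccontr)
    assume "\<not> m \<ge> 2" then have "m = 0 \<or> m = 1" by auto
    then show False using m1 False by auto
  qed
  define k where "k = m - 2"
  have mk: "m = k + 2" using \<open>m \<ge> 2\<close> k_def by simp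
  have in1: "2^(k+1) < \<bar>x\<bar>" using m2[of] mk by auto
  have "x^4 = \<bar>x\<bar>^4" by (simp add: power_even_abs)
  also have "\<dots> \<le> (2^(k+2))^4" using m1 mk by (intro power_mono) auto
  also have "\<dots> = (2^4)^(k+2)" by (metis power_mult mult.commute)
  also have "\<dots> = 16^(k+2)" by simp
  finally have x4: "x^4 \<le> 16^(k+2)" .
  have ind: "indicator {x. 2^(k+1) < \<bar>x\<bar>} x = (1::ennreal)" using in1 by simp
  have "ennreal (x^4) \<le> ennreal (16^(k+2)) * indicator {x. 2^(k+1) < \<bar>x\<bar>} x"
    unfolding ind using x4 by (simp add: ennreal_leI)
  also have "\<dots> \<le> (\<Sum>k. ennreal (16^(k+2)) * indicator {x. 2^(k+1) < \<bar>x\<bar>} x)"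
  proof -
    define f where "f = (\<lambda>k. ennreal (16^(k+2)) * indicator {x. 2^(k+1) < \<bar>x\<bar>} x)"
    have "sum f {k} \<le> suminf f" by (rule sum_le_suminf) auto
    moreover have "sum f {k} = f k" by simp
    ultimately have "f k \<le> suminf f" by simp
    then show ?thesis unfolding f_def .
  qed
  finally show ?thesis by (meson add_increasing order.trans zero_le)
qed

lemma fourth_moment:
  assumes P: "P \<in> noise_class a \<tau>" and a: "a > 4" and tau: "\<tau> > 0"
  shows "integrable P (\<lambda>x. x^4) \<and> (\<integral>x. x^4 \<partial>P) \<le> 16 + 16 * \<tau> powr a / (1 - 2 powr (4 - a))"
proof -
  have ps: "prob_space P" and sP: "sets P = sets borel"
    and tail: "\<And>t. t \<ge> 2 \<Longrightarrow> measure P {x. \<bar>x\<bar> > t} \<le> (\<tau> / t) powr a"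
    using P unfolding noise_class_def by auto
  interpret prob_space P by (rule ps)
  have [measurable_cong]: "sets P = sets borel" by (rule sP)
  define q :: real where "q = 2 powr (4 - a)"
  have q0: "0 < q" unfolding q_def by auto
  have "2 powr (4 - a) < 2 powr 0" by (rule powr_less_mono) (use a in auto)
  then have q1: "q < 1" unfolding q_def by simp
  define u where "u k = 16 * \<tau> powr a * q^(k+1)" for k :: nat
  have usum: "u sums (16 * \<tau> powr a * q / (1 - q))"
  proof -
    have "(\<lambda>k. q^k) sums (1/(1-q))" using geometric_sums[of q] q0 q1 by simp
    then have "(\<lambda>k. (16 * \<tau> powr a * q) * q^k) sums ((16 * \<tau> powr a * q) * (1/(1-q)))"
      by (rule sums_mult)
    then show ?thesis unfolding u_def by (simp add: field_simps)
  qed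
  have set_meas: "{x. 2^(k+1) < \<bar>x\<bar>} \<in> sets P" for k :: nat
    by (simp add: sP)
  have trm: "ennreal (16^(k+2)) * emeasure P {x. 2^(k+1) < \<bar>x\<bar>} \<le> ennreal (u k)" for k :: nat
  proof -
    have "measure P {x. 2^(k+1) < \<bar>x\<bar>} \<le> (\<tau> / 2^(k+1)) powr a"
      using tail[of "2^(k+1)"] by (simp add: self_le_power)
    also have "(\<tau> / 2^(k+1)) powr a = \<tau> powr a / (2 powr a)^(k+1)"
    proof -
      have "(2::real)^(k+1) = 2 powr real (k+1)" by (subst powr_realpow) auto
      then have "((2::real)^(k+1)) powr a = 2 powr (real (k+1) * a)" by (simp add: powr_powr)
      also have "\<dots> = (2 powr a) powr real (k+1)" by (simp add: powr_powr mult.commute)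
      also have "\<dots> = (2 powr a)^(k+1)" by (rule powr_realpow) simp
      finally show ?thesis using tau by (simp add: powr_divide)
    qed
    finally have m: "measure P {x. 2^(k+1) < \<bar>x\<bar>} \<le> \<tau> powr a / (2 powr a)^(k+1)" .
    have "16^(k+2) * (\<tau> powr a / (2 powr a)^(k+1)) = 16 * \<tau> powr a * (16 / 2 powr a)^(k+1)"
      by (simp add: power_divide field_simps)
    also have "16 / 2 powr a = q" unfolding q_def by (simp add: powr_diff)
    finally have e: "16^(k+2) * (\<tau> powr a / (2 powr a)^(k+1)) = u k" unfolding u_def .
    have "16^(k+2) * measure P {x. 2^(k+1) < \<bar>x\<bar>} \<le> u k"
      using mult_left_mono[OF m, of "16^(k+2)"] e by simp
    then show ?thesis
      by (simp add: emeasure_eq_measure ennreal_mult[symmetric] ennreal_leI)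
  qed
  have "(\<integral>\<^sup>+x. ennreal (x^4) \<partial>P) \<le> (\<integral>\<^sup>+x. 16 + (\<Sum>k. ennreal (16^(k+2)) * indicator {x. 2^(k+1) < \<bar>x\<bar>} x) \<partial>P)"
    by (intro nn_integral_mono dyadic_bound)
  also have "\<dots> = 16 + (\<Sum>k. ennreal (16^(k+2)) * emeasure P {x. 2^(k+1) < \<bar>x\<bar>})"
    by (subst nn_integral_add) (auto simp: nn_integral_suminf nn_integral_cmult_indicator set_meas
        emeasure_space_1 sP)
  also have "\<dots> \<le> 16 + (\<Sum>k. ennreal (u k))"
    by (intro add_mono suminf_le trm) auto
  also have "(\<Sum>k. ennreal (u k)) = ennreal (16 * \<tau> powr a * q / (1 - q))"
  proof -
    have "\<And>k. 0 \<le> u k" unfolding u_def using q0 by simp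
    then show ?thesis by (rule suminf_ennreal_eq[OF _ usum])
  qed
  finally have nn: "(\<integral>\<^sup>+x. ennreal (x^4) \<partial>P) \<le> ennreal (16 + 16 * \<tau> powr a * q / (1 - q))"
    using q0 q1 by (simp add: ennreal_plus[symmetric])
  have int: "integrable P (\<lambda>x. x^4)"
    by (rule integrableI_nonneg) (use nn in \<open>auto simp: sP top.not_eq_extremum intro: le_less_trans\<close>)
  have "(\<integral>x. x^4 \<partial>P) = enn2real (\<integral>\<^sup>+x. ennreal (x^4) \<partial>P)"
    by (rule integral_eq_nn_integral) (auto simp: sP)
  also have "\<dots> \<le> 16 + 16 * \<tau> powr a * q / (1 - q)"
    using nn q0 q1 tau by (intro enn2real_leI) auto
  also have "\<dots> \<le> 16 + 16 * \<tau> powr a / (1 - q)"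
    using q0 q1 tau by (simp add: divide_right_mono mult_left_le)
  finally show ?thesis using int unfolding q_def by simp
qed




definition C4 :: "real \<Rightarrow> real \<Rightarrow> real" where
  "C4 a \<tau> = 16 + 16 * \<tau> powr a / (1 - 2 powr (4 - a))"

lemma coord:
  fixes t \<sigma> :: real
  assumes P: "P \<in> noise_class a \<tau>" and a: "a > 4" and tau: "\<tau> > 0"
  defines "N \<equiv> distr P borel (\<lambda>x. t + \<sigma> * x)"
  shows "integrable N (\<lambda>u. u\<^sup>2 - t\<^sup>2 - \<sigma>\<^sup>2)"
    and "(\<integral>u. u\<^sup>2 - t\<^sup>2 - \<sigma>\<^sup>2 \<partial>N) = 0"
    and "integrable N (\<lambda>u. (u\<^sup>2 - t\<^sup>2 - \<sigma>\<^sup>2)\<^sup>2)"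
    and "(\<integral>u. (u\<^sup>2 - t\<^sup>2 - \<sigma>\<^sup>2)\<^sup>2 \<partial>N) \<le> 8 * \<sigma>\<^sup>2 * t\<^sup>2 + 2 * \<sigma>^4 * (C4 a \<tau> + 1)"
proof -
  have ps: "prob_space P" and sP: "sets P = sets borel"
    and i1: "integrable P (\<lambda>x. x)" and e1: "(\<integral>x. x \<partial>P) = 0"
    and i2: "integrable P (\<lambda>x. x^2)" and e2: "(\<integral>x. x^2 \<partial>P) = 1"
    using P unfolding noise_class_def by auto
  interpret prob_space P by (rule ps)
  have i4: "integrable P (\<lambda>x. x^4)" and e4: "(\<integral>x. x^4 \<partial>P) \<le> C4 a \<tau>"
    using fourth_moment[OF P a tau] unfolding C4_def by auto
  have meas: "(\<lambda>x. t + \<sigma> * x) \<in> measurable P borel" unfolding measurable_cong_sets[OF sP refl] by measurable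
  have eqf: "(\<lambda>x. (t + \<sigma> * x)\<^sup>2 - t\<^sup>2 - \<sigma>\<^sup>2) = (\<lambda>x. (2*\<sigma>*t) * x + \<sigma>\<^sup>2 * (x^2 - 1))"
    by (rule ext) (simp add: power2_eq_square algebra_simps)
  have eqf2: "(\<lambda>x. ((t + \<sigma> * x)\<^sup>2 - t\<^sup>2 - \<sigma>\<^sup>2)\<^sup>2) = (\<lambda>x. ((2*\<sigma>*t) * x + \<sigma>\<^sup>2 * (x^2 - 1))\<^sup>2)"
    by (rule ext) (simp add: power2_eq_square algebra_simps)
  have iF: "integrable P (\<lambda>x. (2*\<sigma>*t) * x + \<sigma>\<^sup>2 * (x^2 - 1))"
    using i1 i2 by (intro Bochner_Integration.integrable_add Bochner_Integration.integrable_mult_right Bochner_Integration.integrable_diff) auto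
  have mf: "(\<lambda>u::real. u\<^sup>2 - t\<^sup>2 - \<sigma>\<^sup>2) \<in> borel_measurable borel" by measurable
  have mf2: "(\<lambda>u::real. (u\<^sup>2 - t\<^sup>2 - \<sigma>\<^sup>2)\<^sup>2) \<in> borel_measurable borel" by measurable
  show "integrable N (\<lambda>u. u\<^sup>2 - t\<^sup>2 - \<sigma>\<^sup>2)"
    unfolding N_def integrable_distr_eq[OF meas mf] eqf by (rule iF)
  have "(\<integral>u. u\<^sup>2 - t\<^sup>2 - \<sigma>\<^sup>2 \<partial>N) = (\<integral>x. (2*\<sigma>*t) * x + \<sigma>\<^sup>2 * (x^2 - 1) \<partial>P)"
    unfolding N_def integral_distr[OF meas mf] eqf ..
  also have "\<dots> = (2*\<sigma>*t) * (\<integral>x. x \<partial>P) + \<sigma>\<^sup>2 * ((\<integral>x. x^2 \<partial>P) - 1)"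
    using i1 i2 by (simp add: prob_space)
  also have "\<dots> = 0" using e1 e2 by simp
  finally show "(\<integral>u. u\<^sup>2 - t\<^sup>2 - \<sigma>\<^sup>2 \<partial>N) = 0" .
  have bnd: "((2*\<sigma>*t) * x + \<sigma>\<^sup>2 * (x^2 - 1))\<^sup>2 \<le> 8 * \<sigma>\<^sup>2 * t\<^sup>2 * x^2 + 2 * \<sigma>^4 * (x^4 + 1)" for x
  proof -
    have sq: "(y1+y2)^2 \<le> 2*y1^2 + 2*y2^2" for y1 y2 :: real
    proof -
      have "0 \<le> (y1-y2)^2" by simp
      then show ?thesis by (simp add: power2_eq_square algebra_simps)
    qed
    have x4: "(x^2-1)\<^sup>2 = x^4 - 2*x^2 + 1" by (simp add: power2_eq_square algebra_simps power4_eq_xxxx)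
    have "(x^2-1)\<^sup>2 \<le> x^4 + 1" unfolding x4 by simp
    then have "\<sigma>^4 * (x^2-1)\<^sup>2 \<le> \<sigma>^4 * (x^4 + 1)" by (rule mult_left_mono) simp
    moreover have "(\<sigma>\<^sup>2 * (x^2 - 1))\<^sup>2 = \<sigma>^4 * (x^2-1)\<^sup>2" by (simp add: power_mult_distrib power4_eq_xxxx power2_eq_square)
    moreover have "((2*\<sigma>*t) * x)\<^sup>2 = 4 * \<sigma>\<^sup>2 * t\<^sup>2 * x^2" by (simp add: power_mult_distrib)
    ultimately show ?thesis using sq[of "(2*\<sigma>*t) * x" "\<sigma>\<^sup>2 * (x^2 - 1)"] by linarith
  qed
  have iB: "integrable P (\<lambda>x. 8 * \<sigma>\<^sup>2 * t\<^sup>2 * x^2 + 2 * \<sigma>^4 * (x^4 + 1))"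
    using i2 i4 by auto
  have iS: "integrable P (\<lambda>x. ((2*\<sigma>*t) * x + \<sigma>\<^sup>2 * (x^2 - 1))\<^sup>2)"
  proof (rule Bochner_Integration.integrable_bound[OF iB])
    show "(\<lambda>x. ((2*\<sigma>*t) * x + \<sigma>\<^sup>2 * (x^2 - 1))\<^sup>2) \<in> borel_measurable P"
      unfolding measurable_cong_sets[OF sP refl] by measurable
    show "AE x in P. norm (((2*\<sigma>*t) * x + \<sigma>\<^sup>2 * (x^2 - 1))\<^sup>2) \<le> norm (8 * \<sigma>\<^sup>2 * t\<^sup>2 * x^2 + 2 * \<sigma>^4 * (x^4 + 1))"
    proof (rule AE_I2)
      fix x :: real
      have n1: "norm (((2*\<sigma>*t) * x + \<sigma>\<^sup>2 * (x^2 - 1))\<^sup>2) = ((2*\<sigma>*t) * x + \<sigma>\<^sup>2 * (x^2 - 1))\<^sup>2" by simp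
      have "0 \<le> 8 * \<sigma>\<^sup>2 * t\<^sup>2 * x^2 + 2 * \<sigma>^4 * (x^4 + 1)"
        by (intro add_nonneg_nonneg mult_nonneg_nonneg) (auto simp: zero_le_even_power)
      then have n2: "norm (8 * \<sigma>\<^sup>2 * t\<^sup>2 * x^2 + 2 * \<sigma>^4 * (x^4 + 1)) = 8 * \<sigma>\<^sup>2 * t\<^sup>2 * x^2 + 2 * \<sigma>^4 * (x^4 + 1)"
        by (simp only: real_norm_def abs_of_nonneg)
      show "norm (((2*\<sigma>*t) * x + \<sigma>\<^sup>2 * (x^2 - 1))\<^sup>2) \<le> norm (8 * \<sigma>\<^sup>2 * t\<^sup>2 * x^2 + 2 * \<sigma>^4 * (x^4 + 1))"
        unfolding n1 n2 by (rule bnd)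
    qed
  qed
  show "integrable N (\<lambda>u. (u\<^sup>2 - t\<^sup>2 - \<sigma>\<^sup>2)\<^sup>2)"
    unfolding N_def integrable_distr_eq[OF meas mf2] eqf2 by (rule iS)
  have "(\<integral>u. (u\<^sup>2 - t\<^sup>2 - \<sigma>\<^sup>2)\<^sup>2 \<partial>N) = (\<integral>x. ((2*\<sigma>*t) * x + \<sigma>\<^sup>2 * (x^2 - 1))\<^sup>2 \<partial>P)"
    unfolding N_def integral_distr[OF meas mf2] eqf2 ..
  also have "\<dots> \<le> (\<integral>x. 8 * \<sigma>\<^sup>2 * t\<^sup>2 * x^2 + 2 * \<sigma>^4 * (x^4 + 1) \<partial>P)"
    by (rule integral_mono[OF iS iB bnd])
  also have "\<dots> = 8 * \<sigma>\<^sup>2 * t\<^sup>2 * 1 + 2 * \<sigma>^4 * ((\<integral>x. x^4 \<partial>P) + 1)"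
    using i2 i4 e2 by (simp add: prob_space)
  also have "\<dots> \<le> 8 * \<sigma>\<^sup>2 * t\<^sup>2 + 2 * \<sigma>^4 * (C4 a \<tau> + 1)"
    using e4 by (simp add: mult_left_mono)
  finally show "(\<integral>u. (u\<^sup>2 - t\<^sup>2 - \<sigma>\<^sup>2)\<^sup>2 \<partial>N) \<le> 8 * \<sigma>\<^sup>2 * t\<^sup>2 + 2 * \<sigma>^4 * (C4 a \<tau> + 1)" .
qed




lemma Zbound:
  fixes \<theta> :: "nat \<Rightarrow> real" and \<sigma> :: real and d :: nat
  assumes nP: "P \<in> noise_class a \<tau>" and a: "a > 4" and tau: "\<tau> > 0"
  shows "integrable (obs_law d \<theta> P \<sigma>) (\<lambda>y. (\<Sum>i<d. (y i)\<^sup>2 - (\<theta> i)\<^sup>2 - \<sigma>\<^sup>2)\<^sup>2)"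
    and "(\<integral>y. (\<Sum>i<d. (y i)\<^sup>2 - (\<theta> i)\<^sup>2 - \<sigma>\<^sup>2)\<^sup>2 \<partial>obs_law d \<theta> P \<sigma>)
           \<le> 8 * \<sigma>\<^sup>2 * (\<Sum>i<d. (\<theta> i)\<^sup>2) + 2 * \<sigma>^4 * (C4 a \<tau> + 1) * d"
proof -
  have ps: "prob_space P" and sP: "sets P = sets borel"
    using nP unfolding noise_class_def by auto
  define M where "M i = distr P borel (\<lambda>x. \<theta> i + \<sigma> * x)" for i
  define G where "G i u = u\<^sup>2 - (\<theta> i)\<^sup>2 - \<sigma>\<^sup>2" for i and u :: real
  have Q: "obs_law d \<theta> P \<sigma> = PiM {..<d} M" unfolding obs_law_def M_def ..
  have meas: "(\<lambda>x. t + \<sigma> * x) \<in> measurable P borel" for t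
    unfolding measurable_cong_sets[OF sP refl] by measurable
  interpret product_prob_space M
    by (rule product_prob_spaceI) (unfold M_def, rule prob_space.prob_space_distr[OF ps meas])
  note c = coord[OF nP a tau, of "\<theta> i" \<sigma> for i, folded M_def]
  have iG: "integrable (M i) (G i)" and eG: "integral\<^sup>L (M i) (G i) = 0"
    and iG2: "integrable (M i) (\<lambda>u. (G i u)\<^sup>2)"
    and eG2: "(\<integral>u. (G i u)\<^sup>2 \<partial>M i) \<le> 8 * \<sigma>\<^sup>2 * (\<theta> i)\<^sup>2 + 2 * \<sigma>^4 * (C4 a \<tau> + 1)" for i
    using c[of i] unfolding G_def by auto
  define F where "F i j k u = (if k = i then G i u else 1) * (if k = j then G j u else 1)" for i j k :: nat and u :: real
  have iF: "integrable (M k) (F i j k)" for i j k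
    unfolding F_def using iG[of i] iG[of j] iG2[of i]
    by (cases "k = i"; cases "k = j") (auto simp: power2_eq_square)
  have eF: "integral\<^sup>L (M k) (F i j k) = (if k = i \<and> k = j then (\<integral>u. (G i u)\<^sup>2 \<partial>M i)
              else if k = i \<or> k = j then 0 else 1)" for i j k
    unfolding F_def using eG[of i] eG[of j]
    by (cases "k = i"; cases "k = j") (auto simp: power2_eq_square M.prob_space)
  have prodF: "(\<Prod>k<d. F i j k (y k)) = G i (y i) * G j (y j)" if "i < d" "j < d" for i j y
    using that unfolding F_def by (simp add: prod.distrib)
  have intF: "integrable (PiM {..<d} M) (\<lambda>y. \<Prod>k<d. F i j k (y k))" for i j
    by (rule product_integrable_prod) (auto intro: iF)
  have valF: "(\<integral>y. (\<Prod>k<d. F i j k (y k)) \<partial>PiM {..<d} M) = (if i = j then (\<integral>u. (G i u)\<^sup>2 \<partial>M i) else 0)"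
    if "i < d" "j < d" for i j
  proof -
    have "(\<integral>y. (\<Prod>k<d. F i j k (y k)) \<partial>PiM {..<d} M) = (\<Prod>k<d. integral\<^sup>L (M k) (F i j k))"
      by (rule product_integral_prod) (auto intro: iF)
    also have "\<dots> = (if i = j then (\<integral>u. (G i u)\<^sup>2 \<partial>M i) else 0)"
    proof (cases "i = j")
      case True
      then have "(\<Prod>k<d. integral\<^sup>L (M k) (F i j k)) = (\<Prod>k<d. if k = i then (\<integral>u. (G i u)\<^sup>2 \<partial>M i) else 1)"
        by (intro prod.cong) (auto simp: eF)
      then show ?thesis using True that by simp
    next
      case False
      have "integral\<^sup>L (M i) (F i j i) = 0" using False by (simp add: eF)
      then have "(\<Prod>k<d. integral\<^sup>L (M k) (F i j k)) = 0" using that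
        by (intro prod_zero) auto
      then show ?thesis using False by simp
    qed
    finally show ?thesis .
  qed
  have sqZ: "(\<Sum>i<d. (y i)\<^sup>2 - (\<theta> i)\<^sup>2 - \<sigma>\<^sup>2)\<^sup>2 = (\<Sum>i<d. \<Sum>j<d. \<Prod>k<d. F i j k (y k))" for y
  proof -
    have "(\<Sum>i<d. (y i)\<^sup>2 - (\<theta> i)\<^sup>2 - \<sigma>\<^sup>2)\<^sup>2 = (\<Sum>i<d. G i (y i)) * (\<Sum>j<d. G j (y j))"
      unfolding G_def power2_eq_square[of "sum _ _"] ..
    also have "\<dots> = (\<Sum>i<d. \<Sum>j<d. G i (y i) * G j (y j))" by (rule sum_product)
    also have "\<dots> = (\<Sum>i<d. \<Sum>j<d. \<Prod>k<d. F i j k (y k))"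
      by (intro sum.cong refl) (simp add: prodF)
    finally show ?thesis .
  qed
  have intZ: "integrable (PiM {..<d} M) (\<lambda>y. (\<Sum>i<d. (y i)\<^sup>2 - (\<theta> i)\<^sup>2 - \<sigma>\<^sup>2)\<^sup>2)"
    unfolding sqZ by (intro Bochner_Integration.integrable_sum intF)
  then show "integrable (obs_law d \<theta> P \<sigma>) (\<lambda>y. (\<Sum>i<d. (y i)\<^sup>2 - (\<theta> i)\<^sup>2 - \<sigma>\<^sup>2)\<^sup>2)"
    unfolding Q .
  have "(\<integral>y. (\<Sum>i<d. (y i)\<^sup>2 - (\<theta> i)\<^sup>2 - \<sigma>\<^sup>2)\<^sup>2 \<partial>PiM {..<d} M)
      = (\<Sum>i<d. \<Sum>j<d. (\<integral>y. (\<Prod>k<d. F i j k (y k)) \<partial>PiM {..<d} M))"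
    unfolding sqZ by (simp add: Bochner_Integration.integral_sum intF)
  also have "\<dots> = (\<Sum>i<d. \<Sum>j<d. (if i = j then (\<integral>u. (G i u)\<^sup>2 \<partial>M i) else 0))"
    by (intro sum.cong refl) (simp add: valF)
  also have "\<dots> = (\<Sum>i<d. (\<integral>u. (G i u)\<^sup>2 \<partial>M i))"
    by (intro sum.cong refl) (simp add: sum.delta)
  also have "\<dots> \<le> (\<Sum>i<d. 8 * \<sigma>\<^sup>2 * (\<theta> i)\<^sup>2 + 2 * \<sigma>^4 * (C4 a \<tau> + 1))"
    by (intro sum_mono eG2)
  also have "\<dots> = 8 * \<sigma>\<^sup>2 * (\<Sum>i<d. (\<theta> i)\<^sup>2) + 2 * \<sigma>^4 * (C4 a \<tau> + 1) * d"
    by (simp add: sum.distrib sum_distrib_left)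
  finally show "(\<integral>y. (\<Sum>i<d. (y i)\<^sup>2 - (\<theta> i)\<^sup>2 - \<sigma>\<^sup>2)\<^sup>2 \<partial>obs_law d \<theta> P \<sigma>)
           \<le> 8 * \<sigma>\<^sup>2 * (\<Sum>i<d. (\<theta> i)\<^sup>2) + 2 * \<sigma>^4 * (C4 a \<tau> + 1) * d"
    unfolding Q .
qed




lemma obs_sets: "sets (obs_law d \<theta> P \<sigma>) = sets (sample_space d)"
  unfolding obs_law_def sample_space_def by (rule sets_PiM_cong) auto

lemma obs_space: "space (obs_law d \<theta> P \<sigma>) = space (sample_space d)"
  using obs_sets by (rule sets_eq_imp_space_eq)

lemma obs_prob:
  assumes "P \<in> noise_class a \<tau>"
  shows "prob_space (obs_law d \<theta> P \<sigma>)"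
proof -
  have ps: "prob_space P" and sP: "sets P = sets borel" using assms unfolding noise_class_def by auto
  have meas: "(\<lambda>x. t + \<sigma> * x) \<in> measurable P borel" for t
    unfolding measurable_cong_sets[OF sP refl] by measurable
  show ?thesis unfolding obs_law_def
    by (rule prob_space_PiM) (rule prob_space.prob_space_distr[OF ps meas])
qed

lemma mono_mm:
  fixes E E' :: "real \<Rightarrow> real \<Rightarrow> (nat \<Rightarrow> real) \<Rightarrow> bool"
  assumes sub: "\<P> \<subseteq> noise_class a \<tau>"
    and imp: "\<And>t \<sigma> \<theta>. \<sigma> > 0 \<Longrightarrow> E t \<sigma> \<theta> \<Longrightarrow> E' t \<sigma> \<theta>"
    and meas: "\<And>T \<sigma> \<theta>. T \<in> borel_measurable (sample_space d) \<Longrightarrow>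
        {y\<in>space (sample_space d). E' (T y) \<sigma> \<theta>} \<in> sets (sample_space d)"
  shows "minimax_prob s d \<P> E \<le> minimax_prob s d \<P> E'"
  unfolding minimax_prob_def
proof (intro INF_superset_mono[OF subset_refl] SUP_subset_mono[OF subset_refl] iffD2[OF ereal_less_eq(3)])
  fix T :: "(nat \<Rightarrow> real) \<Rightarrow> real" and P and \<sigma> :: real and \<theta> :: "nat \<Rightarrow> real"
  assume T: "T \<in> borel_measurable (sample_space d)" and P: "P \<in> \<P>" and s: "\<sigma> \<in> {0<..}"
  interpret prob_space "obs_law d \<theta> P \<sigma>" using obs_prob sub P by blast
  show "measure (obs_law d \<theta> P \<sigma>) {y \<in> space (sample_space d). E (T y) \<sigma> \<theta>}
        \<le> measure (obs_law d \<theta> P \<sigma>) {y \<in> space (sample_space d). E' (T y) \<sigma> \<theta>}"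
    by (rule finite_measure_mono) (use imp s meas[OF T] in \<open>auto simp: obs_sets\<close>)
qed

lemma sqrt_dev:
  fixes n k B \<Delta> :: real
  assumes n: "n \<ge> 0" and k: "k \<ge> 0" and B: "B \<ge> 0" and D: "\<bar>\<Delta>\<bar> \<le> k * n + B"
  shows "\<bar>sqrt (max 0 (n\<^sup>2 + \<Delta>)) - n\<bar> \<le> k + 2 * sqrt B"
proof -
  define r where "r = sqrt (max 0 (n\<^sup>2 + \<Delta>))"
  have r0: "r \<ge> 0" unfolding r_def by simp
  have r2: "r\<^sup>2 = max 0 (n\<^sup>2 + \<Delta>)" unfolding r_def by simp
  have d1: "\<bar>r\<^sup>2 - n\<^sup>2\<bar> \<le> \<bar>\<Delta>\<bar>" unfolding r2 by (auto simp: max_def)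
  have fac: "\<bar>r\<^sup>2 - n\<^sup>2\<bar> = \<bar>r - n\<bar> * (r + n)"
  proof -
    have "r\<^sup>2 - n\<^sup>2 = (r - n) * (r + n)" by (simp add: power2_eq_square algebra_simps)
    then show ?thesis using r0 n by (simp add: abs_mult)
  qed
  have le1: "\<bar>r - n\<bar> * (r + n) \<le> k * n + B" using d1 D fac by linarith
  have sq: "\<bar>r - n\<bar>\<^sup>2 \<le> k * n + B"
  proof -
    have "\<bar>r - n\<bar> \<le> r + n" using r0 n by linarith
    then have "\<bar>r - n\<bar> * \<bar>r - n\<bar> \<le> \<bar>r - n\<bar> * (r + n)" by (intro mult_left_mono) auto
    then show ?thesis using le1 by (simp add: power2_eq_square)
  qed
  have sB: "sqrt B \<ge> 0" "(sqrt B)\<^sup>2 = B" using B by auto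
  show ?thesis
  proof (cases "n \<ge> sqrt B \<and> n > 0")
    case True
    have "\<bar>r - n\<bar> * n \<le> k * n + B"
      using le1 r0 by (smt (verit) abs_ge_zero mult_left_mono)
    then have "\<bar>r - n\<bar> \<le> k + B / n" using True by (simp add: field_simps)
    moreover have "B / n \<le> sqrt B"
    proof -
      have "B = sqrt B * sqrt B" using B by simp
      also have "\<dots> \<le> sqrt B * n" using True sB by (intro mult_left_mono) auto
      finally show ?thesis using True by (simp add: field_simps)
    qed
    ultimately show ?thesis unfolding r_def using sB by linarith
  next
    case False
    then have nB: "n \<le> sqrt B" using n sB by auto
    have "\<bar>r - n\<bar>\<^sup>2 \<le> k * sqrt B + B" using sq mult_left_mono[OF nB k] by linarith
    also have "\<dots> \<le> (k + 2 * sqrt B)\<^sup>2"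
    proof -
      have bb: "sqrt B * sqrt B = B" using B by simp
      have e0: "(k + 2 * sqrt B)^2 = k * k + 4 * (k * sqrt B) + 4 * (sqrt B * sqrt B)"
        by (simp add: power2_eq_square algebra_simps)
      have e: "(k + 2 * sqrt B)^2 = k * k + 4 * (k * sqrt B) + 4 * B"
        using e0 unfolding bb .
      have "0 \<le> k * sqrt B" "0 \<le> k * k" using k B by auto
      then show ?thesis unfolding e using B by linarith
    qed
    finally have "\<bar>r - n\<bar>\<^sup>2 \<le> (k + 2 * sqrt B)\<^sup>2" .
    then have "\<bar>r - n\<bar> \<le> k + 2 * sqrt B" by (rule power2_le_imp_le) (use k sB in auto)
    then show ?thesis unfolding r_def .
  qed
qed




lemma sumsq_meas: "(\<lambda>y. \<Sum>i<d. (y i)\<^sup>2 :: real) \<in> borel_measurable (sample_space d)"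
  unfolding sample_space_def by measurable

lemma key_ineq:
  fixes K M c2 c3 \<phi> d :: real
  assumes K: "K > 0" and c2: "c2 > 0" and phi: "\<phi> > 0" and d: "d \<ge> 1"
    and M1: "M \<ge> 1" and M2: "M \<ge> (4*K/c2)\<^sup>2" and M3: "M \<ge> 64*K/c2\<^sup>2"
    and c3: "c3 \<le> c2\<^sup>2/64" "c3 > 0"
    and big: "\<phi>\<^sup>2 > M * sqrt d"
  shows "K + 2 * sqrt (K * sqrt d + c3 * \<phi>\<^sup>2) < c2 * \<phi>"
proof -
  have sd: "sqrt d \<ge> 1" using d by simp
  have "M * 1 \<le> M * sqrt d" by (rule mult_left_mono) (use M1 sd in auto)
  then have "\<phi>\<^sup>2 > (4*K/c2)\<^sup>2" using big M2 by linarith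
  then have p1: "\<phi> > 4*K/c2" by (rule power2_less_imp_less) (use phi in auto)
  then have kk: "K < c2 * \<phi> / 4" using c2 by (simp add: field_simps)
  have "sqrt d < \<phi>\<^sup>2 / M" using big M1 by (simp add: field_simps)
  then have "K * sqrt d \<le> K * (\<phi>\<^sup>2 / M)" using K by (intro mult_left_mono) auto
  also have "\<dots> = (K / M) * \<phi>\<^sup>2" by simp
  also have "\<dots> \<le> (c2\<^sup>2/64) * \<phi>\<^sup>2"
  proof -
    have "K / M \<le> c2\<^sup>2/64" using M3 M1 c2 K by (simp add: field_simps)
    then show ?thesis by (intro mult_right_mono) auto
  qed
  finally have a1: "K * sqrt d \<le> (c2\<^sup>2/64) * \<phi>\<^sup>2" .
  have a2: "c3 * \<phi>\<^sup>2 \<le> (c2\<^sup>2/64) * \<phi>\<^sup>2" using c3 by (intro mult_right_mono) auto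
  have "K * sqrt d + c3 * \<phi>\<^sup>2 \<le> (3 * c2 * \<phi> / 16)\<^sup>2"
  proof -
    have e1: "(3 * c2 * \<phi> / 16)\<^sup>2 = (9/256) * (c2\<^sup>2 * \<phi>\<^sup>2)" by (simp add: power2_eq_square)
    have e2: "(c2\<^sup>2/64) * \<phi>\<^sup>2 = (1/64) * (c2\<^sup>2 * \<phi>\<^sup>2)" by simp
    have "0 \<le> c2\<^sup>2 * \<phi>\<^sup>2" by simp
    then show ?thesis using a1 a2 unfolding e1 e2 by linarith
  qed
  then have "sqrt (K * sqrt d + c3 * \<phi>\<^sup>2) \<le> sqrt ((3 * c2 * \<phi> / 16)\<^sup>2)"
    by (rule real_sqrt_le_mono)
  also have "sqrt ((3 * c2 * \<phi> / 16)\<^sup>2) = 3 * c2 * \<phi> / 16" using c2 phi by simp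
  finally have "sqrt (K * sqrt d + c3 * \<phi>\<^sup>2) \<le> 3 * c2 * \<phi> / 16" .
  moreover have "0 < c2 * \<phi>" using c2 phi by simp
  ultimately show ?thesis using kk by linarith
qed




lemma point_bound:
  fixes S :: "(nat \<Rightarrow> real) \<Rightarrow> real" and \<theta> :: "nat \<Rightarrow> real" and \<sigma> K C c2 c2' c3 \<phi> :: real
    and d :: nat
  assumes nP: "P \<in> noise_class a \<tau>" and a: "a > 4" and tau: "\<tau> > 0" and sig: "\<sigma> > 0" and d: "d \<ge> 1"
    and Sm: "S \<in> borel_measurable (sample_space d)"
    and K: "K > 0" and C: "C = 8 + 2 * (\<bar>C4 a \<tau>\<bar> + 1)" and KK: "K\<^sup>2 = 4 * C / c2'" and c2': "c2' > 0"
    and smallS: "measure (obs_law d \<theta> P \<sigma>) {y\<in>space (sample_space d). c3 * (\<phi>\<^sup>2 / d) \<le> \<bar>S y / \<sigma>\<^sup>2 - 1\<bar>} \<le> c2' / 2"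
    and ineq: "K + 2 * sqrt (K * sqrt d + c3 * \<phi>\<^sup>2) < c2 * \<phi>" and c3: "c3 > 0"
  shows "measure (obs_law d \<theta> P \<sigma>)
     {y\<in>space (sample_space d). c2 * \<phi> \<le> \<bar>(sqrt (max 0 ((\<Sum>i<d. (y i)\<^sup>2) - real d * S y)) - l2norm d \<theta>) / \<sigma>\<bar>}
      \<le> 3 * c2' / 4"
proof -
  define Q where "Q = obs_law d \<theta> P \<sigma>"
  interpret prob_space Q unfolding Q_def by (rule obs_prob[OF nP])
  have spQ: "space Q = space (sample_space d)" unfolding Q_def by (rule obs_space)
  have stQ: "sets Q = sets (sample_space d)" unfolding Q_def by (rule obs_sets)
  define n where "n = l2norm d \<theta>"
  have n0: "n \<ge> 0" unfolding n_def l2norm_def by (intro real_sqrt_ge_zero sum_nonneg) simp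
  have nsq: "n\<^sup>2 = (\<Sum>i<d. (\<theta> i)\<^sup>2)" unfolding n_def l2norm_def by (simp add: sum_nonneg)
  define Z where "Z y = (\<Sum>i<d. (y i)\<^sup>2 - (\<theta> i)\<^sup>2 - \<sigma>\<^sup>2)" for y :: "nat \<Rightarrow> real"
  define r where "r = K * (\<sigma> * n + \<sigma>\<^sup>2 * sqrt d)"
  have sd: "sqrt d \<ge> 1" using d by simp
  have r0: "r > 0" unfolding r_def using K sig n0 sd by (simp add: add_nonneg_pos)
  define A where "A = {y\<in>space (sample_space d). r \<le> \<bar>Z y\<bar>}"
  define B3 where "B3 = {y\<in>space (sample_space d). c3 * (\<phi>\<^sup>2 / d) \<le> \<bar>S y / \<sigma>\<^sup>2 - 1\<bar>}"
  define B2 where "B2 = {y\<in>space (sample_space d). c2 * \<phi> \<le> \<bar>(sqrt (max 0 ((\<Sum>i<d. (y i)\<^sup>2) - real d * S y)) - n) / \<sigma>\<bar>}"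
  have Zm: "Z \<in> borel_measurable (sample_space d)" unfolding Z_def sample_space_def by measurable
  have sm: "(\<lambda>y. \<Sum>i<d. (y i)\<^sup>2 :: real) \<in> borel_measurable (sample_space d)" by (rule sumsq_meas)
  have Am: "A \<in> sets Q" unfolding A_def stQ using Zm by measurable
  have B3m: "B3 \<in> sets Q" unfolding B3_def stQ using Sm by measurable
  have ZQ: "Z \<in> borel_measurable Q" using Zm by (simp add: measurable_cong_sets[OF stQ refl])
  have iZ: "integrable Q (\<lambda>y. (Z y)\<^sup>2)" unfolding Q_def Z_def by (rule Zbound(1)[OF nP a tau])
  have eZ: "(\<integral>y. (Z y)\<^sup>2 \<partial>Q) \<le> 8 * \<sigma>\<^sup>2 * n\<^sup>2 + 2 * \<sigma>^4 * (C4 a \<tau> + 1) * d"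
    unfolding Q_def Z_def nsq by (rule Zbound(2)[OF nP a tau])
  have "measure Q A \<le> (\<integral>y. (Z y)\<^sup>2 \<partial>Q) / r\<^sup>2"
    unfolding A_def spQ[symmetric] by (rule second_moment_method[OF ZQ iZ r0])
  also have "\<dots> \<le> c2' / 4"
  proof -
    have "(\<integral>y. (Z y)\<^sup>2 \<partial>Q) \<le> C * (\<sigma>\<^sup>2 * n\<^sup>2 + \<sigma>^4 * d)"
    proof -
      have "2 * \<sigma>^4 * (C4 a \<tau> + 1) * d \<le> 2 * \<sigma>^4 * (\<bar>C4 a \<tau>\<bar> + 1) * d"
        by (intro mult_right_mono mult_left_mono) auto
      moreover have "8 * \<sigma>\<^sup>2 * n\<^sup>2 \<le> C * (\<sigma>\<^sup>2 * n\<^sup>2)"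
      proof -
        have h: "8 \<le> C" unfolding C by simp
        have "8 * (\<sigma>\<^sup>2 * n\<^sup>2) \<le> C * (\<sigma>\<^sup>2 * n\<^sup>2)" by (rule mult_right_mono[OF h]) simp
        then show ?thesis by (simp add: mult.assoc)
      qed
      moreover have "2 * \<sigma>^4 * (\<bar>C4 a \<tau>\<bar> + 1) * d \<le> C * (\<sigma>^4 * d)" unfolding C
        by (simp add: algebra_simps)
      ultimately show ?thesis using eZ by (simp add: algebra_simps)
    qed
    also have "\<dots> \<le> C * (r\<^sup>2 / K\<^sup>2)"
    proof -
      have "r\<^sup>2 / K\<^sup>2 = (\<sigma> * n + \<sigma>\<^sup>2 * sqrt d)\<^sup>2" unfolding r_def using K by (simp add: power_mult_distrib)
      also have "\<dots> = \<sigma>\<^sup>2 * n\<^sup>2 + \<sigma>^4 * d + 2 * (\<sigma> * n) * (\<sigma>\<^sup>2 * sqrt d)"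
        using d by (simp add: power2_eq_square algebra_simps power4_eq_xxxx)
      finally have "\<sigma>\<^sup>2 * n\<^sup>2 + \<sigma>^4 * d \<le> r\<^sup>2 / K\<^sup>2" using sig n0 by simp
      then show ?thesis unfolding C by (intro mult_left_mono) auto
    qed
    finally have "(\<integral>y. (Z y)\<^sup>2 \<partial>Q) \<le> C * (r\<^sup>2 / K\<^sup>2)" .
    then have "(\<integral>y. (Z y)\<^sup>2 \<partial>Q) / r\<^sup>2 \<le> C / K\<^sup>2" using r0 K by (simp add: field_simps)
    also have "C / K\<^sup>2 = c2' / 4" unfolding KK using c2' C by (simp add: field_simps)
    finally show ?thesis .
  qed
  finally have mA: "measure Q A \<le> c2' / 4" .
  have incl: "B2 \<subseteq> A \<union> B3"
  proof
    fix y assume y: "y \<in> B2"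
    show "y \<in> A \<union> B3"
    proof (rule ccontr)
      assume "y \<notin> A \<union> B3"
      then have zA: "\<bar>Z y\<bar> < r" and zB: "\<bar>S y / \<sigma>\<^sup>2 - 1\<bar> < c3 * (\<phi>\<^sup>2 / d)" and ys: "y \<in> space (sample_space d)"
        using y unfolding A_def B3_def B2_def by auto
      define \<Delta> where "\<Delta> = (\<Sum>i<d. (y i)\<^sup>2) - real d * S y - n\<^sup>2"
      have sumy: "(\<Sum>i<d. (y i)\<^sup>2) = Z y + n\<^sup>2 + d * \<sigma>\<^sup>2"
        unfolding Z_def nsq by (simp add: sum_subtractf)
      have De: "\<Delta> = Z y - d * \<sigma>\<^sup>2 * (S y / \<sigma>\<^sup>2 - 1)"
        unfolding \<Delta>_def sumy using sig by (simp add: field_simps)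
      have "\<bar>d * \<sigma>\<^sup>2 * (S y / \<sigma>\<^sup>2 - 1)\<bar> = (d * \<sigma>\<^sup>2) * \<bar>S y / \<sigma>\<^sup>2 - 1\<bar>" by (simp add: abs_mult)
      also have "\<dots> \<le> d * \<sigma>\<^sup>2 * (c3 * (\<phi>\<^sup>2 / d))"
        by (rule mult_left_mono) (use zB in auto)
      also have "\<dots> = c3 * \<sigma>\<^sup>2 * \<phi>\<^sup>2" using d by (simp add: field_simps)
      finally have t2: "\<bar>d * \<sigma>\<^sup>2 * (S y / \<sigma>\<^sup>2 - 1)\<bar> \<le> c3 * \<sigma>\<^sup>2 * \<phi>\<^sup>2" .
      have Db: "\<bar>\<Delta>\<bar> \<le> (K * \<sigma>) * n + (K * \<sigma>\<^sup>2 * sqrt d + c3 * \<sigma>\<^sup>2 * \<phi>\<^sup>2)"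
        using zA t2 unfolding De r_def by (simp add: algebra_simps abs_triangle_ineq4 [THEN order_trans])
      have "\<bar>sqrt (max 0 (n\<^sup>2 + \<Delta>)) - n\<bar> \<le> K * \<sigma> + 2 * sqrt (K * \<sigma>\<^sup>2 * sqrt d + c3 * \<sigma>\<^sup>2 * \<phi>\<^sup>2)"
        by (rule sqrt_dev[OF n0 _ _ Db]) (use K sig c3 in auto)
      also have "sqrt (K * \<sigma>\<^sup>2 * sqrt d + c3 * \<sigma>\<^sup>2 * \<phi>\<^sup>2) = \<sigma> * sqrt (K * sqrt d + c3 * \<phi>\<^sup>2)"
      proof -
        have "K * \<sigma>\<^sup>2 * sqrt d + c3 * \<sigma>\<^sup>2 * \<phi>\<^sup>2 = \<sigma>\<^sup>2 * (K * sqrt d + c3 * \<phi>\<^sup>2)" by (simp add: algebra_simps)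
        then show ?thesis using sig by (simp add: real_sqrt_mult)
      qed
      finally have "\<bar>sqrt (max 0 (n\<^sup>2 + \<Delta>)) - n\<bar> \<le> \<sigma> * (K + 2 * sqrt (K * sqrt d + c3 * \<phi>\<^sup>2))"
        by (simp add: algebra_simps)
      also have "\<dots> < \<sigma> * (c2 * \<phi>)" using ineq sig by simp
      finally have lt: "\<bar>sqrt (max 0 (n\<^sup>2 + \<Delta>)) - n\<bar> / \<sigma> < c2 * \<phi>" using sig by (simp add: field_simps)
      have "n\<^sup>2 + \<Delta> = (\<Sum>i<d. (y i)\<^sup>2) - real d * S y" unfolding \<Delta>_def by simp
      then have "\<bar>(sqrt (max 0 ((\<Sum>i<d. (y i)\<^sup>2) - real d * S y)) - n) / \<sigma>\<bar> < c2 * \<phi>"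
        using lt sig by simp
      then show False using y unfolding B2_def by auto
    qed
  qed
  have "measure Q B2 \<le> measure Q (A \<union> B3)"
    by (rule finite_measure_mono[OF incl]) (use Am B3m in auto)
  also have "\<dots> \<le> measure Q A + measure Q B3"
    using Am B3m by (intro measure_subadditive) (auto simp: emeasure_eq_measure)
  also have "\<dots> \<le> c2' / 4 + c2' / 2" using mA smallS unfolding B3_def Q_def by linarith
  finally show ?thesis unfolding B2_def Q_def n_def by simp
qed




lemma msd: fixes x M :: real assumes "x > 0" shows "M * sqrt x / x = M / sqrt x"
proof -
  have s: "sqrt x > 0" using assms by simp
  have "x = sqrt x * sqrt x" using assms by simp
  then have "M * sqrt x / x = M * sqrt x / (sqrt x * sqrt x)" by (rule arg_cong[where f="\<lambda>y. M * sqrt x / y"])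
  also have "\<dots> = M / sqrt x" by (rule mult_divide_mult_cancel_right) (use s in simp)
  finally show ?thesis .
qed

theorem lemma8:
  fixes a \<tau> c\<^sub>1 c\<^sub>2 c\<^sub>1' c\<^sub>2' :: real
  assumes "\<tau> > 0" and "a > 4"
    and "c\<^sub>1 > 0" and "c\<^sub>2 > 0" and "c\<^sub>1' > 0" and "c\<^sub>2' > 0"
  shows "\<exists>c\<^sub>3 c\<^sub>3' :: real. c\<^sub>3 > 0 \<and> c\<^sub>3' > 0 \<and>
    (\<forall>(s::nat) (d::nat) (\<P>::real measure set) (\<phi>::real).
       1 \<le> s \<longrightarrow> s \<le> d \<longrightarrow> \<P> \<subseteq> noise_class a \<tau> \<longrightarrow> \<phi> > 0 \<longrightarrow>
       minimax_prob s d \<P> (\<lambda>(t::real) (\<sigma>::real) (\<theta>::nat\<Rightarrow>real). \<bar>t / \<sigma>\<^sup>2 - 1\<bar> \<ge> c\<^sub>1 / sqrt d) \<ge> ereal c\<^sub>1' \<longrightarrow>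
       minimax_prob s d \<P> (\<lambda>(t::real) (\<sigma>::real) (\<theta>::nat\<Rightarrow>real). \<bar>(t - l2norm d \<theta>) / \<sigma>\<bar> \<ge> c\<^sub>2 * \<phi>) \<ge> ereal c\<^sub>2' \<longrightarrow>
       minimax_prob s d \<P>
         (\<lambda>(t::real) (\<sigma>::real) (\<theta>::nat\<Rightarrow>real). \<bar>t / \<sigma>\<^sup>2 - 1\<bar> \<ge> c\<^sub>3 * max (1 / sqrt d) (\<phi>\<^sup>2 / d)) \<ge> ereal c\<^sub>3')"
proof -
  note tau = assms(1) and a = assms(2) and c1 = assms(3) and c2 = assms(4) and c1' = assms(5) and c2' = assms(6)
  define C where "C = 8 + 2 * (\<bar>C4 a \<tau>\<bar> + 1)"
  have C0: "C > 0" unfolding C_def by (simp add: add_pos_nonneg)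
  define K where "K = sqrt (4 * C / c\<^sub>2')"
  have K0: "K > 0" unfolding K_def using C0 c2' by simp
  have KK: "K\<^sup>2 = 4 * C / c\<^sub>2'" unfolding K_def using C0 c2' by simp
  define M where "M = max 1 (max ((4*K/c\<^sub>2)\<^sup>2) (64*K/c\<^sub>2\<^sup>2))"
  have M1: "M \<ge> 1" and M2: "M \<ge> (4*K/c\<^sub>2)\<^sup>2" and M3: "M \<ge> 64*K/c\<^sub>2\<^sup>2" unfolding M_def by auto
  define c3 where "c3 = min (c\<^sub>1 / M) (c\<^sub>2\<^sup>2 / 64)"
  have c3pos: "c3 > 0" unfolding c3_def using c1 c2 M1 by simp
  have c3a: "c3 \<le> c\<^sub>1 / M" and c3b: "c3 \<le> c\<^sub>2\<^sup>2 / 64" unfolding c3_def by (rule min.cobounded1, rule min.cobounded2)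
  define c3' where "c3' = min c\<^sub>1' (c\<^sub>2' / 2)"
  have c3'pos: "c3' > 0" unfolding c3'_def using c1' c2' by simp
  have c3'a: "c3' \<le> c\<^sub>1'" and c3'b: "c3' \<le> c\<^sub>2' / 2" unfolding c3'_def by (rule min.cobounded1, rule min.cobounded2)
  show ?thesis
  proof (rule exI[of _ c3], rule exI[of _ c3'], intro conjI c3pos c3'pos allI impI)
    fix s d :: nat and \<P> :: "real measure set" and \<phi> :: real
    assume s1: "1 \<le> s" and sd: "s \<le> d" and sub: "\<P> \<subseteq> noise_class a \<tau>" and phi: "\<phi> > 0"
      and H1: "minimax_prob s d \<P> (\<lambda>t \<sigma> \<theta>. \<bar>t / \<sigma>\<^sup>2 - 1\<bar> \<ge> c\<^sub>1 / sqrt d) \<ge> ereal c\<^sub>1'"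
      and H2: "minimax_prob s d \<P> (\<lambda>t \<sigma> \<theta>. \<bar>(t - l2norm d \<theta>) / \<sigma>\<bar> \<ge> c\<^sub>2 * \<phi>) \<ge> ereal c\<^sub>2'"
    have d1: "real d \<ge> 1" using s1 sd by simp
    have sq1: "sqrt (real d) \<ge> 1" using d1 by simp
    have dd: "real d = sqrt (real d) * sqrt (real d)" by simp
    show "minimax_prob s d \<P> (\<lambda>t \<sigma> \<theta>. \<bar>t / \<sigma>\<^sup>2 - 1\<bar> \<ge> c3 * max (1 / sqrt d) (\<phi>\<^sup>2 / d)) \<ge> ereal c3'"
    proof (cases "\<phi>\<^sup>2 \<le> M * sqrt d")
      case True
      have mx: "max (1 / sqrt d) (\<phi>\<^sup>2 / d) \<le> M / sqrt d"
      proof -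
        have "1 / sqrt d \<le> M / sqrt d" using M1 sq1 by (simp add: divide_right_mono)
        moreover have "\<phi>\<^sup>2 / d \<le> M / sqrt d"
        proof -
          have "\<phi>\<^sup>2 / d \<le> (M * sqrt d) / d" using True d1 by (simp add: divide_right_mono)
          also have "\<dots> = M / sqrt d" by (rule msd) (use d1 in simp)
          finally show ?thesis .
        qed
        ultimately show ?thesis by simp
      qed
      have c3mx: "c3 * max (1 / sqrt d) (\<phi>\<^sup>2 / d) \<le> c\<^sub>1 / sqrt d"
      proof -
        have "c3 * max (1 / sqrt d) (\<phi>\<^sup>2 / d) \<le> (c\<^sub>1 / M) * (M / sqrt d)"
          using c3a mx c3pos by (intro mult_mono) (auto simp: le_max_iff_disj)
        also have "\<dots> = c\<^sub>1 / sqrt d" using M1 by simp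
        finally show ?thesis .
      qed
      have "minimax_prob s d \<P> (\<lambda>t \<sigma> \<theta>. \<bar>t / \<sigma>\<^sup>2 - 1\<bar> \<ge> c\<^sub>1 / sqrt d)
          \<le> minimax_prob s d \<P> (\<lambda>t \<sigma> \<theta>. \<bar>t / \<sigma>\<^sup>2 - 1\<bar> \<ge> c3 * max (1 / sqrt d) (\<phi>\<^sup>2 / d))"
      proof (rule mono_mm[OF sub])
        fix t \<sigma> :: real and \<theta> :: "nat \<Rightarrow> real"
        assume "c\<^sub>1 / sqrt d \<le> \<bar>t / \<sigma>\<^sup>2 - 1\<bar>"
        then show "c3 * max (1 / sqrt d) (\<phi>\<^sup>2 / d) \<le> \<bar>t / \<sigma>\<^sup>2 - 1\<bar>" using c3mx by linarith
      next
        fix T :: "(nat \<Rightarrow> real) \<Rightarrow> real" and \<sigma> :: real and \<theta> :: "nat \<Rightarrow> real"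
        assume "T \<in> borel_measurable (sample_space d)"
        then show "{y \<in> space (sample_space d). c3 * max (1 / sqrt d) (\<phi>\<^sup>2 / d) \<le> \<bar>T y / \<sigma>\<^sup>2 - 1\<bar>} \<in> sets (sample_space d)"
          by measurable
      qed
      moreover have "ereal c3' \<le> ereal c\<^sub>1'" using c3'a by simp
      ultimately show ?thesis using H1 by (meson order.trans)
    next
      case False
      then have big: "\<phi>\<^sup>2 > M * sqrt d" by simp
      have mx: "max (1 / sqrt d) (\<phi>\<^sup>2 / d) = \<phi>\<^sup>2 / d"
      proof -
        have "1 / sqrt d \<le> M / sqrt d" using M1 sq1 by (simp add: divide_right_mono)
        also have "M / sqrt d = (M * sqrt d) / d" by (rule msd[symmetric]) (use d1 in simp)
        also have "\<dots> \<le> \<phi>\<^sup>2 / d" using big d1 by (simp add: divide_right_mono)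
        finally show ?thesis by simp
      qed
      have ineq: "K + 2 * sqrt (K * sqrt d + c3 * \<phi>\<^sup>2) < c\<^sub>2 * \<phi>"
        by (rule key_ineq[OF K0 c2 phi d1 M1 M2 M3 c3b c3pos big])
      show ?thesis
      proof (rule ccontr)
        assume "\<not> ?thesis"
        then have "minimax_prob s d \<P> (\<lambda>t \<sigma> \<theta>. \<bar>t / \<sigma>\<^sup>2 - 1\<bar> \<ge> c3 * max (1 / sqrt d) (\<phi>\<^sup>2 / d)) < ereal c3'"
          by simp
        then obtain S where Sm: "S \<in> borel_measurable (sample_space d)"
          and SS: "(SUP P \<in> \<P>. SUP \<sigma> \<in> {0<..}. SUP \<theta> \<in> sparse_vecs s d.
              ereal (measure (obs_law d \<theta> P \<sigma>) {y \<in> space (sample_space d). c3 * max (1 / sqrt d) (\<phi>\<^sup>2 / d) \<le> \<bar>S y / \<sigma>\<^sup>2 - 1\<bar>})) < ereal c3'"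
          unfolding minimax_prob_def INF_less_iff by blast
        define That where "That y = sqrt (max 0 ((\<Sum>i<d. (y i)\<^sup>2) - real d * S y))" for y :: "nat \<Rightarrow> real"
        have Thm: "That \<in> borel_measurable (sample_space d)"
          unfolding That_def using Sm sumsq_meas[of d] by measurable
        have pt: "measure (obs_law d \<theta> P \<sigma>) {y \<in> space (sample_space d). c\<^sub>2 * \<phi> \<le> \<bar>(That y - l2norm d \<theta>) / \<sigma>\<bar>} \<le> 3 * c\<^sub>2' / 4"
          if P: "P \<in> \<P>" and sg: "\<sigma> \<in> {0<..}" and th: "\<theta> \<in> sparse_vecs s d" for P \<sigma> \<theta>
        proof -
          have up: "ereal (measure (obs_law d \<theta> P \<sigma>) {y \<in> space (sample_space d). c3 * max (1 / sqrt d) (\<phi>\<^sup>2 / d) \<le> \<bar>S y / \<sigma>\<^sup>2 - 1\<bar>})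
              \<le> (SUP P \<in> \<P>. SUP \<sigma> \<in> {0<..}. SUP \<theta> \<in> sparse_vecs s d.
              ereal (measure (obs_law d \<theta> P \<sigma>) {y \<in> space (sample_space d). c3 * max (1 / sqrt d) (\<phi>\<^sup>2 / d) \<le> \<bar>S y / \<sigma>\<^sup>2 - 1\<bar>}))"
            by (intro SUP_upper2[OF P] SUP_upper2[OF sg] SUP_upper[OF th])
          have "ereal (measure (obs_law d \<theta> P \<sigma>) {y \<in> space (sample_space d). c3 * max (1 / sqrt d) (\<phi>\<^sup>2 / d) \<le> \<bar>S y / \<sigma>\<^sup>2 - 1\<bar>}) < ereal c3'"
            by (rule le_less_trans[OF up SS])
          then have "measure (obs_law d \<theta> P \<sigma>) {y \<in> space (sample_space d). c3 * max (1 / sqrt d) (\<phi>\<^sup>2 / d) \<le> \<bar>S y / \<sigma>\<^sup>2 - 1\<bar>} < c3'"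
            by simp
          then have small: "measure (obs_law d \<theta> P \<sigma>) {y \<in> space (sample_space d). c3 * (\<phi>\<^sup>2 / d) \<le> \<bar>S y / \<sigma>\<^sup>2 - 1\<bar>} \<le> c\<^sub>2' / 2"
            using c3'b unfolding mx by simp
          show ?thesis unfolding That_def
            by (rule point_bound[OF _ a tau _ _ Sm K0 C_def KK c2' small ineq c3pos])
               (use sub P sg s1 sd in auto)
        qed
        have "minimax_prob s d \<P> (\<lambda>t \<sigma> \<theta>. \<bar>(t - l2norm d \<theta>) / \<sigma>\<bar> \<ge> c\<^sub>2 * \<phi>) \<le> ereal (3 * c\<^sub>2' / 4)"
          unfolding minimax_prob_def
          by (rule INF_lower2[OF Thm], intro SUP_least) (use pt in simp)
        with H2 have "ereal c\<^sub>2' \<le> ereal (3 * c\<^sub>2' / 4)" by (rule order.trans)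
        then show False using c2' by simp
      qed
    qed
  qed
qed


end
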